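(* Let $\mathcal{C}$ be a linear code of length $n$ over $\mathbb{F}_{q^m}$. The generalized subfield subcodes of $\mathcal{C}$ (over all choices of $\mathcal{B},u,f,\pi$) are exactly the codes obtained as follows: choose nonzero $a_1,\dots,a_n\in\mathbb{F}_{q^m}$ and let $V_i=\mathbb{F}_qa_i$ (an $\mathbb{F}_q$-subspace of dimension 1); set $\mathcal{C}'=\mathcal{C}\cap(V_1\times\cdots\times V_n)$; identify each $V_i$ with $\mathbb{F}_q$ via $\lambda a_i\mapsto\lambda$, giving the $\mathbb{F}_q$-linear code $C=\{(\lambda_1,\dots,\lambda_n)\in\mathbb{F}_q^n:(\lambda_1a_1,\dots,\lambda_na_n)\in\mathcal{C}'\}$; choose a permutation $\pi$ of the $n$ coordinates and return $\pi(C)$.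
   Context: For a basis $\mathcal{B}=(b_1,\dots,b_m)$ of $\mathbb{F}_{q^m}$ over $\mathbb{F}_q$, $\phi_{\mathcal{B}}(\sum_ix_ib_i)=(x_1,\dots,x_m)$ and $Im_q(\mathcal{C})=\{(\phi_{\mathcal{B}}(c_1)|\cdots|\phi_{\mathcal{B}}(c_n)):c\in\mathcal{C}\}\subseteq(\mathbb{F}_q^m)^n$. For $f=(f_1,\dots,f_n)\in GL_q(m)^n$ ($\mathbb{F}_q$-linear automorphisms of $\mathbb{F}_q^m$) and a permutation $\pi$ of $\{1,\dots,n\}$, $mon=\pi\circ f$ applies $f_i$ to the $i$-th block and then permutes the blocks by $\pi$. For $u=(u_1,\dots,u_n)\in\{1,\dots,m\}^n$ and $D\subseteq(\mathbb{F}_q^m)^n$, with $x_{j,l}$ the $l$-th coordinate of block $j$ of $x$, $S_u(D)=\{(x_{1,u_1},\dots,x_{n,u_n}):x\in D,\ x_{j,l}=0\ \forall j,\ \forall l\neq u_j\}\subseteq\mathbb{F}_q^n$. The generalized subfield subcode of $\mathcal{C}$ relative to $\mathcal{B},u,mon$ is $S_u(mon(Im_q(\mathcal{C})))$. *)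

theory Defs
  imports "HOL-Combinatorics.Permutations"
begin

text \<open>Conventions: the field F_{q^m} is a finite field type 'K; F_q is a subfield
  F of 'K (given as a set). Indices are 0-based: coordinates 0..<n, block
  coordinates 0..<m.\<close>

definition subfield :: "'K::field set \<Rightarrow> bool" where
  "subfield F \<longleftrightarrow> 0 \<in> F \<and> 1 \<in> F \<and>
     (\<forall>x\<in>F. \<forall>y\<in>F. x + y \<in> F \<and> x * y \<in> F) \<and>
     (\<forall>x\<in>F. - x \<in> F \<and> inverse x \<in> F)"

definition vecs :: "'K::zero set \<Rightarrow> nat \<Rightarrow> (nat \<Rightarrow> 'K) set" where
  "vecs A N = {v. (\<forall>i<N. v i \<in> A) \<and> (\<forall>i\<ge>N. v i = 0)}"

definition linear_code :: "nat \<Rightarrow> (nat \<Rightarrow> 'K::field) set \<Rightarrow> bool" where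
  "linear_code n C \<longleftrightarrow> C \<subseteq> vecs UNIV n \<and> (\<lambda>_. 0) \<in> C \<and>
     (\<forall>x\<in>C. \<forall>y\<in>C. (\<lambda>i. x i + y i) \<in> C) \<and>
     (\<forall>a. \<forall>x\<in>C. (\<lambda>i. a * x i) \<in> C)"

definition is_basis :: "'K::field set \<Rightarrow> nat \<Rightarrow> 'K list \<Rightarrow> bool" where
  "is_basis F m B \<longleftrightarrow> length B = m \<and>
     (\<forall>x. \<exists>!c. c \<in> vecs F m \<and> x = (\<Sum>l<m. c l * B ! l))"

definition phi :: "'K::field set \<Rightarrow> nat \<Rightarrow> 'K list \<Rightarrow> 'K \<Rightarrow> (nat \<Rightarrow> 'K)" where
  "phi F m B x = (THE c. c \<in> vecs F m \<and> x = (\<Sum>l<m. c l * B ! l))"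

text \<open>Im_q(C): elements of (F_q^m)^n as x j l (block j, coordinate l).\<close>
definition Im_q :: "'K::field set \<Rightarrow> nat \<Rightarrow> nat \<Rightarrow> 'K list \<Rightarrow> (nat \<Rightarrow> 'K) set
    \<Rightarrow> (nat \<Rightarrow> nat \<Rightarrow> 'K) set" where
  "Im_q F m n B C = {(\<lambda>j. if j < n then phi F m B (c j) else (\<lambda>_. 0)) | c. c \<in> C}"

definition GL_q :: "'K::field set \<Rightarrow> nat \<Rightarrow> ((nat \<Rightarrow> 'K) \<Rightarrow> (nat \<Rightarrow> 'K)) \<Rightarrow> bool" where
  "GL_q F m g \<longleftrightarrow> bij_betw g (vecs F m) (vecs F m) \<and>
     (\<forall>x\<in>vecs F m. \<forall>y\<in>vecs F m. g (\<lambda>l. x l + y l) = (\<lambda>l. g x l + g y l)) \<and>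
     (\<forall>a\<in>F. \<forall>x\<in>vecs F m. g (\<lambda>l. a * x l) = (\<lambda>l. a * g x l))"

text \<open>mon = pi o f: block i is mapped by f i and moved to position pi i.\<close>
definition mon :: "nat \<Rightarrow> (nat \<Rightarrow> (nat \<Rightarrow> 'K) \<Rightarrow> (nat \<Rightarrow> 'K)) \<Rightarrow> (nat \<Rightarrow> nat)
    \<Rightarrow> (nat \<Rightarrow> nat \<Rightarrow> 'K::zero) \<Rightarrow> (nat \<Rightarrow> nat \<Rightarrow> 'K)" where
  "mon n f \<pi> x = (\<lambda>j. if j < n then f (inv \<pi> j) (x (inv \<pi> j)) else (\<lambda>_. 0))"

definition S_u :: "nat \<Rightarrow> nat \<Rightarrow> (nat \<Rightarrow> nat) \<Rightarrow> (nat \<Rightarrow> nat \<Rightarrow> 'K::zero) set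
    \<Rightarrow> (nat \<Rightarrow> 'K) set" where
  "S_u m n u D = {(\<lambda>j. if j < n then x j (u j) else 0) | x.
      x \<in> D \<and> (\<forall>j<n. \<forall>l<m. l \<noteq> u j \<longrightarrow> x j l = 0)}"

definition gen_subfield_subcode :: "'K::field set \<Rightarrow> nat \<Rightarrow> nat \<Rightarrow> (nat \<Rightarrow> 'K) set
    \<Rightarrow> 'K list \<Rightarrow> (nat \<Rightarrow> nat) \<Rightarrow> (nat \<Rightarrow> (nat \<Rightarrow> 'K) \<Rightarrow> (nat \<Rightarrow> 'K)) \<Rightarrow> (nat \<Rightarrow> nat)
    \<Rightarrow> (nat \<Rightarrow> 'K) set" where
  "gen_subfield_subcode F m n C B u f \<pi> = S_u m n u ((mon n f \<pi>) ` (Im_q F m n B C))"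

definition V_prod :: "'K::field set \<Rightarrow> nat \<Rightarrow> (nat \<Rightarrow> 'K) \<Rightarrow> (nat \<Rightarrow> 'K) set" where
  "V_prod F n a = {v \<in> vecs UNIV n. \<forall>i<n. \<exists>c\<in>F. v i = c * a i}"

definition scaled_code :: "'K::field set \<Rightarrow> nat \<Rightarrow> (nat \<Rightarrow> 'K) set \<Rightarrow> (nat \<Rightarrow> 'K)
    \<Rightarrow> (nat \<Rightarrow> 'K) set" where
  "scaled_code F n C a = {l \<in> vecs F n. (\<lambda>i. l i * a i) \<in> C \<inter> V_prod F n a}"

text \<open>pi(C): coordinate i is moved to position pi i.\<close>
definition perm_code :: "(nat \<Rightarrow> nat) \<Rightarrow> (nat \<Rightarrow> 'K) set \<Rightarrow> (nat \<Rightarrow> 'K) set" where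
  "perm_code \<pi> C = (\<lambda>v. v \<circ> inv \<pi>) ` C"

end

theory Submission
  imports Defs
begin


definition bsum :: "'K::field list \<Rightarrow> nat \<Rightarrow> (nat \<Rightarrow> 'K) \<Rightarrow> 'K" where
  "bsum B m v = (\<Sum>l<m. v l * B ! l)"

definition unitv :: "nat \<Rightarrow> nat \<Rightarrow> 'K::{zero,one}" where
  "unitv k = (\<lambda>l. if l = k then 1 else 0)"

lemma sf_0: "subfield F \<Longrightarrow> 0 \<in> F" by (simp add: subfield_def)
lemma sf_1: "subfield F \<Longrightarrow> 1 \<in> F" by (simp add: subfield_def)
lemma sf_add: "subfield F \<Longrightarrow> x \<in> F \<Longrightarrow> y \<in> F \<Longrightarrow> x + y \<in> F" by (simp add: subfield_def)
lemma sf_mult: "subfield F \<Longrightarrow> x \<in> F \<Longrightarrow> y \<in> F \<Longrightarrow> x * y \<in> F" by (simp add: subfield_def)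
lemma sf_uminus: "subfield F \<Longrightarrow> x \<in> F \<Longrightarrow> - x \<in> F" by (simp add: subfield_def)
lemma sf_inverse: "subfield F \<Longrightarrow> x \<in> F \<Longrightarrow> inverse x \<in> F" by (simp add: subfield_def)
lemma sf_diff: "subfield F \<Longrightarrow> x \<in> F \<Longrightarrow> y \<in> F \<Longrightarrow> x - y \<in> F"
  using sf_add sf_uminus by (metis diff_conv_add_uminus)
lemma sf_divide: "subfield F \<Longrightarrow> x \<in> F \<Longrightarrow> y \<in> F \<Longrightarrow> x / y \<in> F"
  using sf_mult sf_inverse by (metis divide_inverse)

lemma vecsI: "(\<And>i. i < N \<Longrightarrow> v i \<in> A) \<Longrightarrow> (\<And>i. i \<ge> N \<Longrightarrow> v i = 0) \<Longrightarrow> v \<in> vecs A N"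
  by (simp add: vecs_def)
lemma vecsD: "v \<in> vecs A N \<Longrightarrow> i < N \<Longrightarrow> v i \<in> A"
  and vecsD2: "v \<in> vecs A N \<Longrightarrow> i \<ge> N \<Longrightarrow> v i = 0"
  by (auto simp: vecs_def)

lemma unitv_vecs: "subfield F \<Longrightarrow> k < m \<Longrightarrow> unitv k \<in> vecs F m"
  by (rule vecsI) (auto simp: unitv_def sf_0 sf_1)

lemma basis_P1:
  assumes "is_basis F m B"
  shows "phi F m B x \<in> vecs F m" "bsum B m (phi F m B x) = x"
proof -
  have ex: "\<exists>!c. c \<in> vecs F m \<and> x = (\<Sum>l<m. c l * B ! l)" using assms by (simp add: is_basis_def)
  from theI'[OF ex] show "phi F m B x \<in> vecs F m" "bsum B m (phi F m B x) = x"
    by (auto simp: phi_def bsum_def)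
qed

lemma basis_P2:
  assumes "is_basis F m B" "c \<in> vecs F m"
  shows "phi F m B (bsum B m c) = c"
proof -
  have ex: "\<exists>!d. d \<in> vecs F m \<and> bsum B m c = (\<Sum>l<m. d l * B ! l)" using assms(1) by (simp add: is_basis_def)
  show ?thesis unfolding phi_def
    apply (rule the1_equality[OF ex])
    using assms(2) by (simp add: bsum_def)
qed

lemma phi_inj:
  assumes "is_basis F m B" "phi F m B x = phi F m B y" shows "x = y"
  using basis_P1(2)[OF assms(1), of x] basis_P1(2)[OF assms(1), of y] assms(2) by metis

lemma bsum_add: "bsum B m (\<lambda>l. x l + y l) = bsum B m x + bsum B m y"
  by (simp add: bsum_def distrib_right sum.distrib)
lemma bsum_smult: "bsum B m (\<lambda>l. a * x l) = a * bsum B m x"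
  by (simp add: bsum_def sum_distrib_left mult.assoc)

lemma vecs_add: "subfield F \<Longrightarrow> x \<in> vecs F m \<Longrightarrow> y \<in> vecs F m \<Longrightarrow> (\<lambda>l. x l + y l) \<in> vecs F m"
  by (rule vecsI) (auto simp: vecsD vecsD2 sf_add)
lemma vecs_smult: "subfield F \<Longrightarrow> a \<in> F \<Longrightarrow> x \<in> vecs F m \<Longrightarrow> (\<lambda>l. a * x l) \<in> vecs F m"
  by (rule vecsI) (auto simp: vecsD vecsD2 sf_mult)

lemma phi_add:
  assumes "subfield F" "is_basis F m B"
  shows "phi F m B (x + y) = (\<lambda>l. phi F m B x l + phi F m B y l)"
proof -
  have "x + y = bsum B m (\<lambda>l. phi F m B x l + phi F m B y l)"
    by (simp add: bsum_add basis_P1[OF assms(2)])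
  then show ?thesis
    using basis_P2[OF assms(2) vecs_add[OF assms(1) basis_P1(1)[OF assms(2)] basis_P1(1)[OF assms(2)]]]
    by simp
qed

lemma phi_smult:
  assumes "subfield F" "is_basis F m B" "a \<in> F"
  shows "phi F m B (a * x) = (\<lambda>l. a * phi F m B x l)"
proof -
  have "a * x = bsum B m (\<lambda>l. a * phi F m B x l)"
    by (simp add: bsum_smult basis_P1[OF assms(2)])
  then show ?thesis
    using basis_P2[OF assms(2) vecs_smult[OF assms(1) assms(3) basis_P1(1)[OF assms(2)]]]
    by simp
qed

lemma phi_zero:
  assumes "subfield F" "is_basis F m B"
  shows "phi F m B 0 = (\<lambda>_. 0)"
proof -
  have "(\<lambda>_. 0) \<in> vecs F m" by (rule vecsI) (auto simp: sf_0[OF assms(1)])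
  moreover have "bsum B m (\<lambda>_. 0) = 0" by (simp add: bsum_def)
  ultimately show ?thesis using basis_P2[OF assms(2)] by metis
qed

lemma GL_zero:
  assumes "GL_q F m g" "subfield F"
  shows "g (\<lambda>_. 0) = (\<lambda>_. 0)"
proof -
  have z: "(\<lambda>_. 0) \<in> vecs F m" by (rule vecsI) (auto simp: sf_0[OF assms(2)])
  have h: "\<forall>x\<in>vecs F m. \<forall>y\<in>vecs F m. g (\<lambda>l. x l + y l) = (\<lambda>l. g x l + g y l)"
    using assms(1) unfolding GL_q_def by blast
  have "g (\<lambda>_. 0) = (\<lambda>l. g (\<lambda>_. 0) l + g (\<lambda>_. 0) l)"
    using h[rule_format, OF z z] by simp
  then have "\<And>l. g (\<lambda>_. 0) l = g (\<lambda>_. 0) l + g (\<lambda>_. 0) l" by (metis)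
  then show ?thesis by (metis add.right_neutral add_left_cancel)
qed

lemma GL_vecs: "GL_q F m g \<Longrightarrow> v \<in> vecs F m \<Longrightarrow> g v \<in> vecs F m"
  unfolding GL_q_def bij_betw_def by blast

lemma key2:
  assumes sf: "subfield F" and B: "is_basis F m B" and g: "GL_q F m g"
    and ga: "g (phi F m B a) = unitv k" and mu: "\<mu> \<in> F"
  shows "g (phi F m B (\<mu> * a)) = (\<lambda>l. \<mu> * unitv k l)"
proof -
  have "phi F m B (\<mu> * a) = (\<lambda>l. \<mu> * phi F m B a l)" by (rule phi_smult[OF sf B mu])
  then show ?thesis using g mu basis_P1(1)[OF B] ga unfolding GL_q_def by auto
qed

lemma key1:
  assumes sf: "subfield F" and B: "is_basis F m B" and g: "GL_q F m g"
    and ga: "g (phi F m B a) = unitv k" and k: "k < m"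
    and supp: "\<forall>l<m. l \<noteq> k \<longrightarrow> g (phi F m B c) l = 0"
  shows "\<exists>\<mu>\<in>F. c = \<mu> * a"
proof -
  let ?v = "g (phi F m B c)"
  have v: "?v \<in> vecs F m" by (rule GL_vecs[OF g basis_P1(1)[OF B]])
  define \<mu> where "\<mu> = ?v k"
  have mu: "\<mu> \<in> F" using vecsD[OF v k] by (simp add: \<mu>_def)
  have "?v = (\<lambda>l. \<mu> * unitv k l)"
  proof
    fix l show "?v l = \<mu> * unitv k l"
    proof (cases "l < m")
      case True then show ?thesis using supp by (auto simp: unitv_def \<mu>_def)
    next
      case False then show ?thesis using vecsD2[OF v] k by (auto simp: unitv_def)
    qed
  qed
  then have "g (phi F m B c) = g (phi F m B (\<mu> * a))" using key2[OF sf B g ga mu] by simp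
  moreover have "inj_on g (vecs F m)" using g unfolding GL_q_def bij_betw_def by blast
  ultimately have "phi F m B c = phi F m B (\<mu> * a)"
    using basis_P1(1)[OF B] by (meson inj_onD)
  then show ?thesis using phi_inj[OF B] mu by blast
qed


lemma main:
  assumes sf: "subfield F" and B: "is_basis F m B" and u: "\<forall>j<n. u j < m"
    and f: "\<forall>j<n. GL_q F m (f j)" and pi: "\<pi> permutes {..<n}" and C: "linear_code n C"
    and a: "\<forall>i<n. f i (phi F m B (a i)) = unitv (u (\<pi> i))"
  shows "gen_subfield_subcode F m n C B u f \<pi> = perm_code \<pi> (scaled_code F n C a)"
proof -
  have Cv: "C \<subseteq> vecs UNIV n" using C by (simp add: linear_code_def)
  have pinv: "\<pi> (inv \<pi> j) = j" for j using permutes_inverses(1)[OF pi] .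
  have pinv2: "inv \<pi> (\<pi> j) = j" for j using permutes_inverses(2)[OF pi] .
  have invlt: "j < n \<Longrightarrow> inv \<pi> j < n" for j
    using permutes_in_image[OF permutes_inv[OF pi], of j] by simp
  have plt: "i < n \<Longrightarrow> \<pi> i < n" for i
    using permutes_in_image[OF pi, of i] by simp
  have invge: "\<not> j < n \<Longrightarrow> inv \<pi> j = j" for j
    using permutes_not_in[OF permutes_inv[OF pi], of j] by simp
  have ulim: "i < n \<Longrightarrow> u (\<pi> i) < m" for i using u plt by blast
  define Im where "Im = Im_q F m n B C"
  define D where "D = mon n f \<pi> ` Im"
  have GSS: "gen_subfield_subcode F m n C B u f \<pi> = S_u m n u D"
    by (simp add: gen_subfield_subcode_def D_def Im_def)
  show ?thesis unfolding GSS
  proof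
    show "S_u m n u D \<subseteq> perm_code \<pi> (scaled_code F n C a)"
    proof
      fix w assume "w \<in> S_u m n u D"
      then obtain x where w: "w = (\<lambda>j. if j < n then x j (u j) else 0)" and xD: "x \<in> D"
        and supp: "\<forall>j<n. \<forall>l<m. l \<noteq> u j \<longrightarrow> x j l = 0"
        unfolding S_u_def by blast
      from xD obtain c where cC: "c \<in> C" and x: "x = mon n f \<pi> (\<lambda>j. if j < n then phi F m B (c j) else (\<lambda>_. 0))"
        unfolding D_def Im_def Im_q_def by blast
      have xpi: "x (\<pi> i) = f i (phi F m B (c i))" if "i < n" for i
        using that plt[OF that] by (simp add: x mon_def pinv2)
      have supp': "\<forall>l<m. l \<noteq> u (\<pi> i) \<longrightarrow> f i (phi F m B (c i)) l = 0" if "i < n" for i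
        using supp plt[OF that] xpi[OF that] by metis
      have ex: "\<exists>\<mu>\<in>F. c i = \<mu> * a i" if "i < n" for i
        using key1[OF sf B f[rule_format, OF that] a[rule_format, OF that] ulim[OF that] supp'[OF that]] f that by blast
      define lam where "lam i = (if i < n then f i (phi F m B (c i)) (u (\<pi> i)) else 0)" for i
      have lamc: "(\<lambda>i. lam i * a i) = c"
      proof
        fix i show "lam i * a i = c i"
        proof (cases "i < n")
          case True
          then obtain \<mu> where mu: "\<mu> \<in> F" "c i = \<mu> * a i" using ex by blast
          have "lam i = \<mu>" using True key2[OF sf B f[rule_format, OF True] a[rule_format, OF True] mu(1)] f mu(2)
            by (simp add: lam_def unitv_def)
          then show ?thesis using mu by simp
        next
          case False then show ?thesis using cC Cv vecsD2 by (fastforce simp: lam_def)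
        qed
      qed
      have lamv: "lam \<in> vecs F n"
      proof (rule vecsI)
        fix i assume i: "i < n"
        have "f i (phi F m B (c i)) \<in> vecs F m"
          using GL_vecs[OF _ basis_P1(1)[OF B]] f i by blast
        then show "lam i \<in> F" using vecsD ulim[OF i] i by (simp add: lam_def)
      qed (simp add: lam_def)
      have Vp: "c \<in> V_prod F n a" using cC Cv ex by (auto simp: V_prod_def)
      have lamS: "lam \<in> scaled_code F n C a"
        using lamv lamc cC Vp by (simp add: scaled_code_def)
      have "w = lam \<circ> inv \<pi>"
      proof
        fix j show "w j = (lam \<circ> inv \<pi>) j"
        proof (cases "j < n")
          case True
          then have "x j = f (inv \<pi> j) (phi F m B (c (inv \<pi> j)))"
            using xpi[OF invlt[OF True]] pinv by simp
          then show ?thesis using True invlt[OF True] by (simp add: w lam_def pinv)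
        next
          case False then show ?thesis by (simp add: w lam_def invge)
        qed
      qed
      then show "w \<in> perm_code \<pi> (scaled_code F n C a)"
        unfolding perm_code_def using lamS by blast
    qed
  next
    show "perm_code \<pi> (scaled_code F n C a) \<subseteq> S_u m n u D"
    proof
      fix w assume "w \<in> perm_code \<pi> (scaled_code F n C a)"
      then obtain lam where w: "w = lam \<circ> inv \<pi>" and lamv: "lam \<in> vecs F n"
        and cC: "(\<lambda>i. lam i * a i) \<in> C"
        unfolding perm_code_def scaled_code_def by blast
      define c where "c = (\<lambda>i. lam i * a i)"
      define y where "y = (\<lambda>j. if j < n then phi F m B (c j) else (\<lambda>_. 0))"
      define x where "x = mon n f \<pi> y"
      have yI: "y \<in> Im_q F m n B C" unfolding Im_q_def y_def
        by (rule CollectI, rule exI[of _ c]) (simp add: cC c_def)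
      have xD: "x \<in> D" unfolding x_def D_def Im_def by (rule imageI[OF yI])
      have xj: "x j = (\<lambda>l. lam (inv \<pi> j) * unitv (u j) l)" if j: "j < n" for j
      proof -
        have "x j = f (inv \<pi> j) (phi F m B (lam (inv \<pi> j) * a (inv \<pi> j)))"
          using j invlt[OF j] by (simp add: x_def mon_def y_def c_def)
        also have "\<dots> = (\<lambda>l. lam (inv \<pi> j) * unitv (u (\<pi> (inv \<pi> j))) l)"
          using key2[OF sf B f[rule_format, OF invlt[OF j]] a[rule_format, OF invlt[OF j]] vecsD[OF lamv invlt[OF j]]] f invlt[OF j]
          by blast
        finally show ?thesis by (simp add: pinv)
      qed
      have "w = (\<lambda>j. if j < n then x j (u j) else 0)"
      proof
        fix j show "w j = (if j < n then x j (u j) else 0)"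
          using xj vecsD2[OF lamv] invge by (auto simp: w unitv_def)
      qed
      moreover have "\<forall>j<n. \<forall>l<m. l \<noteq> u j \<longrightarrow> x j l = 0"
        using xj by (simp add: unitv_def)
      ultimately show "w \<in> S_u m n u D" unfolding S_u_def using xD by blast
    qed
  qed
qed


lemma vecs_0: "vecs F 0 = {\<lambda>_. 0}"
  by (auto simp: vecs_def)

lemma vecs_Suc: "vecs F (Suc k) = (\<lambda>(v,c). v(k:=c)) ` (vecs F k \<times> F)"
proof (rule set_eqI iffI)+
  fix w assume w: "w \<in> vecs F (Suc k)"
  have "w(k:=0) \<in> vecs F k" using w by (auto simp: vecs_def)
  moreover have "w k \<in> F" using w by (auto simp: vecs_def)
  moreover have "w = (\<lambda>(v,c). v(k:=c)) (w(k:=0), w k)" by simp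
  ultimately show "w \<in> (\<lambda>(v,c). v(k:=c)) ` (vecs F k \<times> F)" by blast
next
  fix w assume "w \<in> (\<lambda>(v,c). v(k:=c)) ` (vecs F k \<times> F)"
  then show "w \<in> vecs F (Suc k)" by (auto simp: vecs_def)
qed

lemma vecs_Suc_inj: "inj_on (\<lambda>(v,c). v(k:=c)) (vecs F k \<times> F)"
proof (rule inj_onI, clarsimp)
  fix v c v' c' assume v: "v \<in> vecs F k" and v': "v' \<in> vecs F k" and e: "v(k := c) = v'(k := c')"
  have "c = c'" using fun_cong[OF e, of k] by simp
  moreover have "v = v'"
  proof
    fix l show "v l = v' l"
      using fun_cong[OF e, of l] vecsD2[OF v, of k] vecsD2[OF v', of k] by (cases "l = k") auto
  qed
  ultimately show "v = v' \<and> c = c'" by simp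
qed

lemma vecs_card: "finite F \<Longrightarrow> finite (vecs F k) \<and> card (vecs F k) = card F ^ k"
proof (induction k)
  case 0 then show ?case by (simp add: vecs_0)
next
  case (Suc k)
  then show ?case
    by (simp add: vecs_Suc card_image[OF vecs_Suc_inj] card_cartesian_product)
qed

lemma card_ge2:
  assumes "subfield F" "finite F" shows "2 \<le> card F"
proof -
  have "{0, 1} \<subseteq> F" using sf_0[OF assms(1)] sf_1[OF assms(1)] by simp
  then have "card {0::'a, 1} \<le> card F" using assms(2) by (rule card_mono[rotated])
  then show ?thesis by simp
qed

lemma bsum_restrict: "bsum B k (v(k:=0)) = bsum B k v"
  by (simp add: bsum_def)

lemma bsum_snoc: "length B = k \<Longrightarrow> bsum (B @ [b]) (Suc k) v = bsum B k v + v k * b"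
  by (simp add: bsum_def nth_append)

lemma indep:
  fixes F :: "'K::{field,finite} set"
  assumes sf: "subfield F" and card: "card (UNIV :: 'K set) = card F ^ m"
  shows "k \<le> m \<Longrightarrow> \<exists>B. length B = k \<and> inj_on (bsum B k) (vecs F k)"
proof (induction k)
  case 0 then show ?case by (simp add: vecs_0)
next
  case (Suc k)
  then obtain B where lB: "length B = k" and inj: "inj_on (bsum B k) (vecs F k)" by auto
  have fin: "finite F" by simp
  have "card (bsum B k ` vecs F k) = card F ^ k"
    using card_image[OF inj] vecs_card[OF fin] by simp
  also have "\<dots> < card F ^ m"
    using card_ge2[OF sf fin] Suc.prems by (intro power_strict_increasing) auto
  finally have "bsum B k ` vecs F k \<noteq> UNIV" using card by auto
  then obtain b where b: "b \<notin> bsum B k ` vecs F k" by blast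
  have "inj_on (bsum (B @ [b]) (Suc k)) (vecs F (Suc k))"
  proof (rule inj_onI)
    fix v w assume v: "v \<in> vecs F (Suc k)" and w: "w \<in> vecs F (Suc k)"
      and e: "bsum (B @ [b]) (Suc k) v = bsum (B @ [b]) (Suc k) w"
    have v0: "v(k:=0) \<in> vecs F k" using v by (auto simp: vecs_def)
    have w0: "w(k:=0) \<in> vecs F k" using w by (auto simp: vecs_def)
    have vk: "v k \<in> F" and wk: "w k \<in> F" using v w by (auto simp: vecs_def)
    have e2: "bsum B k (v(k:=0)) + v k * b = bsum B k (w(k:=0)) + w k * b"
      using e by (simp add: bsum_snoc lB bsum_restrict)
    show "v = w"
    proof (cases "v k = w k")
      case True
      then have "bsum B k (v(k:=0)) = bsum B k (w(k:=0))" using e2 by simp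
      then have "v(k:=0) = w(k:=0)" using inj v0 w0 by (meson inj_onD)
      then show ?thesis using True by (metis fun_upd_triv fun_upd_upd)
    next
      case False
      define d where "d = v k - w k"
      have d: "d \<noteq> 0" "d \<in> F" using False sf_diff[OF sf vk wk] by (auto simp: d_def)
      define ev where "ev = (\<lambda>l. ((w(k:=0)) l - (v(k:=0)) l) / d)"
      have evv: "ev \<in> vecs F k"
      proof (rule vecsI)
        fix i assume "i < k"
        then show "ev i \<in> F" unfolding ev_def
          by (intro sf_divide[OF sf] sf_diff[OF sf] d vecsD[OF w0] vecsD[OF v0])
      next
        fix i assume ki: "k \<le> i"
        have "(w(k:=0)) i = 0" "(v(k:=0)) i = 0" using vecsD2[OF w0 ki] vecsD2[OF v0 ki] by auto
        then show "ev i = 0" by (simp add: ev_def del: fun_upd_apply)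
      qed
      have "bsum B k ev = (bsum B k (w(k:=0)) - bsum B k (v(k:=0))) / d"
        unfolding ev_def bsum_def by (simp add: sum_divide_distrib[symmetric] sum_subtractf[symmetric] left_diff_distrib del: fun_upd_apply)
      also have "\<dots> = b" using e2 d(1) unfolding d_def by (simp add: field_simps)
      finally show ?thesis using b evv by blast
    qed
  qed
  then show ?case using lB by (intro exI[of _ "B @ [b]"]) simp
qed

lemma exists_basis:
  fixes F :: "'K::{field,finite} set"
  assumes sf: "subfield F" and card: "card (UNIV :: 'K set) = card F ^ m"
  shows "\<exists>B. is_basis F m B"
proof -
  obtain B where lB: "length B = m" and inj: "inj_on (bsum B m) (vecs F m)"
    using indep[OF sf card, of m] by auto
  have fin: "finite F" by simp
  have "card (bsum B m ` vecs F m) = card (UNIV :: 'K set)"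
    using card_image[OF inj] vecs_card[OF fin] card by simp
  then have surj: "bsum B m ` vecs F m = UNIV"
    by (metis card_subset_eq finite_UNIV subset_UNIV)
  have "\<exists>!c. c \<in> vecs F m \<and> x = (\<Sum>l<m. c l * B ! l)" for x
  proof -
    obtain c where "c \<in> vecs F m" "x = bsum B m c" using surj by (metis UNIV_I imageE)
    then show ?thesis using inj unfolding bsum_def inj_on_def by metis
  qed
  then show ?thesis using lB unfolding is_basis_def by blast
qed


lemma GL_mult:
  assumes sf: "subfield F" and B: "is_basis F m B" and r: "r \<noteq> 0"
  shows "GL_q F m (\<lambda>v. phi F m B (bsum B m v * r))"
  unfolding GL_q_def
proof (intro conjI ballI)
  show "bij_betw (\<lambda>v. phi F m B (bsum B m v * r)) (vecs F m) (vecs F m)"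
  proof (rule bij_betw_byWitness[where f' = "\<lambda>v. phi F m B (bsum B m v / r)"])
    show "\<forall>a\<in>vecs F m. phi F m B (bsum B m (phi F m B (bsum B m a * r)) / r) = a"
      using r by (simp add: basis_P1[OF B] basis_P2[OF B])
    show "\<forall>a\<in>vecs F m. phi F m B (bsum B m (phi F m B (bsum B m a / r)) * r) = a"
      using r by (simp add: basis_P1[OF B] basis_P2[OF B])
  qed (auto simp: basis_P1[OF B])
next
  fix x y assume "x \<in> vecs F m" "y \<in> vecs F m"
  show "phi F m B (bsum B m (\<lambda>l. x l + y l) * r) =
      (\<lambda>l. phi F m B (bsum B m x * r) l + phi F m B (bsum B m y * r) l)"
    by (simp add: bsum_add distrib_right phi_add[OF sf B])
next
  fix a x assume a: "a \<in> F" and "x \<in> vecs F m"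
  show "phi F m B (bsum B m (\<lambda>l. a * x l) * r) = (\<lambda>l. a * phi F m B (bsum B m x * r) l)"
    by (simp add: bsum_smult mult.assoc phi_smult[OF sf B a])
qed

theorem proposition8:
  fixes F :: "'K::{field,finite} set" and m n :: nat and C :: "(nat \<Rightarrow> 'K) set"
  assumes "subfield F"
    and "card (UNIV :: 'K set) = card F ^ m"
    and "linear_code n C"
  shows "{gen_subfield_subcode F m n C B u f \<pi> | B u f \<pi>.
            is_basis F m B \<and> (\<forall>j<n. u j < m) \<and> (\<forall>j<n. GL_q F m (f j)) \<and> \<pi> permutes {..<n}}
       = {perm_code \<pi> (scaled_code F n C a) | a \<pi>.
            (\<forall>i<n. a i \<noteq> 0) \<and> \<pi> permutes {..<n}}"
proof (rule set_eqI iffI)+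
  note sf = assms(1) and card = assms(2) and C = assms(3)
  fix X
  assume "X \<in> {gen_subfield_subcode F m n C B u f \<pi> | B u f \<pi>.
            is_basis F m B \<and> (\<forall>j<n. u j < m) \<and> (\<forall>j<n. GL_q F m (f j)) \<and> \<pi> permutes {..<n}}"
  then obtain B u f \<pi> where X: "X = gen_subfield_subcode F m n C B u f \<pi>"
    and B: "is_basis F m B" and u: "\<forall>j<n. u j < m" and f: "\<forall>j<n. GL_q F m (f j)"
    and pi: "\<pi> permutes {..<n}" by blast
  have plt: "i < n \<Longrightarrow> \<pi> i < n" for i
    using permutes_in_image[OF pi, of i] by simp
  have ex: "\<exists>c. f i (phi F m B c) = unitv (u (\<pi> i))" if i: "i < n" for i
  proof -
    have uv: "unitv (u (\<pi> i)) \<in> vecs F m" using unitv_vecs[OF sf] u plt[OF i] by blast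
    have "f i ` vecs F m = vecs F m" using f i unfolding GL_q_def bij_betw_def by blast
    then obtain v where v: "v \<in> vecs F m" "f i v = unitv (u (\<pi> i))" using uv by (metis imageE)
    show ?thesis using basis_P2[OF B v(1)] v(2) by metis
  qed
  define a where "a i = (SOME c. f i (phi F m B c) = unitv (u (\<pi> i)))" for i
  have a: "\<forall>i<n. f i (phi F m B (a i)) = unitv (u (\<pi> i))"
  proof (intro allI impI)
    fix i assume "i < n"
    then show "f i (phi F m B (a i)) = unitv (u (\<pi> i))"
      unfolding a_def by (rule someI_ex[OF ex])
  qed
  have anz: "\<forall>i<n. a i \<noteq> 0"
  proof (intro allI impI notI)
    fix i assume i: "i < n" and a0: "a i = 0"
    have "f i (phi F m B (a i)) = (\<lambda>_. 0)"
      using a0 phi_zero[OF sf B] GL_zero[OF f[rule_format, OF i] sf] by simp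
    then have "unitv (u (\<pi> i)) = (\<lambda>_. 0::'K)" using a i by simp
    then have "unitv (u (\<pi> i)) (u (\<pi> i)) = (0::'K)" by simp
    then show False by (simp add: unitv_def)
  qed
  have "X = perm_code \<pi> (scaled_code F n C a)"
    using main[OF sf B u f pi C a] X by simp
  then show "X \<in> {perm_code \<pi> (scaled_code F n C a) | a \<pi>.
            (\<forall>i<n. a i \<noteq> 0) \<and> \<pi> permutes {..<n}}" using anz pi by blast
next
  note sf = assms(1) and card = assms(2) and C = assms(3)
  fix X
  assume "X \<in> {perm_code \<pi> (scaled_code F n C a) | a \<pi>.
            (\<forall>i<n. a i \<noteq> 0) \<and> \<pi> permutes {..<n}}"
  then obtain a \<pi> where X: "X = perm_code \<pi> (scaled_code F n C a)"
    and anz: "\<forall>i<n. a i \<noteq> 0" and pi: "\<pi> permutes {..<n}" by blast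
  obtain B where B: "is_basis F m B" using exists_basis[OF sf card] by blast
  have m: "0 < m"
  proof (rule ccontr)
    assume "\<not> 0 < m"
    then have "card (UNIV :: 'K set) = 1" using card by simp
    moreover have "card {0::'K, 1} \<le> card (UNIV :: 'K set)" by (rule card_mono) auto
    ultimately show False by simp
  qed
  have B0: "phi F m B (B ! 0) = unitv 0"
  proof -
    have "bsum B m (unitv 0) = (\<Sum>l<m. if l = 0 then B ! l else 0)"
      unfolding bsum_def unitv_def by (rule sum.cong) auto
    also have "\<dots> = B ! 0" using m by (simp add: sum.delta)
    finally have "bsum B m (unitv 0) = B ! 0" .
    then show ?thesis using basis_P2[OF B unitv_vecs[OF sf m]] by simp
  qed
  have B0nz: "B ! 0 \<noteq> 0"
  proof
    assume "B ! 0 = 0"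
    then have "unitv 0 = (\<lambda>_. 0::'K)" using B0 phi_zero[OF sf B] by simp
    then have "unitv 0 0 = (0::'K)" by simp
    then show False by (simp add: unitv_def)
  qed
  define f where "f i = (\<lambda>v. phi F m B (bsum B m v * (B ! 0 / a i)))" for i
  define u :: "nat \<Rightarrow> nat" where "u = (\<lambda>_. 0)"
  have f: "\<forall>j<n. GL_q F m (f j)"
  proof (intro allI impI)
    fix j assume "j < n"
    then have "B ! 0 / a j \<noteq> 0" using anz B0nz by simp
    then show "GL_q F m (f j)" unfolding f_def by (rule GL_mult[OF sf B])
  qed
  have u: "\<forall>j<n. u j < m" using m by (simp add: u_def)
  have a: "\<forall>i<n. f i (phi F m B (a i)) = unitv (u (\<pi> i))"
    using anz B0 by (simp add: f_def u_def basis_P1[OF B])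
  have "X = gen_subfield_subcode F m n C B u f \<pi>"
    using main[OF sf B u f pi C a] X by simp
  then show "X \<in> {gen_subfield_subcode F m n C B u f \<pi> | B u f \<pi>.
            is_basis F m B \<and> (\<forall>j<n. u j < m) \<and> (\<forall>j<n. GL_q F m (f j)) \<and> \<pi> permutes {..<n}}"
    using B u f pi by blast
qed

end
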